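(* Let $X$ be an Alexandroff space, $Y$ a topological space, and $f:X\to Y$ an arbitrary map. The following are equivalent: (i) $f$ has closed graph; (ii) for every connected component $C$ of $X$, $f(C)$ is a singleton closed subset of $Y$; (iii) for every $x\in X$, $f([x]_{\Re_X})$ is a singleton closed subset of $Y$. Moreover, if these hold then $f$ is continuous.
   Context: For a map $f:X\to Y$ its graph is $G_f=\{(x,f(x)):x\in X\}$; $f$ has closed graph if $G_f$ is closed in $X\times Y$ (product topology). A topological space $X$ is an Alexandroff space if the intersection of every nonempty family of open subsets of $X$ is open; equivalently, every point $a\in X$ has a smallest open neighbourhood, denoted $V_a$. On an Alexandroff space $X$ define the relation $\Re_X$ by: $(x,y)\in\Re_X$ iff there exist $x=x_1,x_2,\ldots,x_n=y$ in $X$ with $V_{x_i}\cap V_{x_{i+1}}\neq\emptyset$ for all $i\in\{1,\ldots,n-1\}$. This is an equivalence relation, and $[x]_{\Re_X}=\{y\in X:(x,y)\in\Re_X\}$ denotes the equivalence class of $x$. *)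

theory Defs
  imports "HOL-Analysis.Analysis"
begin

definition alexandroff_space :: "'a topology \<Rightarrow> bool" where
  "alexandroff_space X \<longleftrightarrow>
     (\<forall>\<U>. \<U> \<noteq> {} \<and> (\<forall>U\<in>\<U>. openin X U) \<longrightarrow> openin X (\<Inter>\<U>))"

definition min_nbhd :: "'a topology \<Rightarrow> 'a \<Rightarrow> 'a set" where
  "min_nbhd X a = \<Inter>{U. openin X U \<and> a \<in> U}"

definition alex_adj :: "'a topology \<Rightarrow> 'a \<Rightarrow> 'a \<Rightarrow> bool" where
  "alex_adj X x y \<longleftrightarrow> x \<in> topspace X \<and> y \<in> topspace X \<and> min_nbhd X x \<inter> min_nbhd X y \<noteq> {}"

text \<open>The relation Re_X: chains x = x1, ..., xn = y with consecutive minimal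
  neighbourhoods intersecting (n = 1 gives reflexivity).\<close>
definition alex_rel :: "'a topology \<Rightarrow> 'a \<Rightarrow> 'a \<Rightarrow> bool" where
  "alex_rel X = (alex_adj X)\<^sup>*\<^sup>*"

definition alex_class :: "'a topology \<Rightarrow> 'a \<Rightarrow> 'a set" where
  "alex_class X x = {y \<in> topspace X. alex_rel X x y}"

definition graph_of :: "'a topology \<Rightarrow> ('a \<Rightarrow> 'b) \<Rightarrow> ('a \<times> 'b) set" where
  "graph_of X f = {(x, f x) | x. x \<in> topspace X}"

definition closed_graph :: "'a topology \<Rightarrow> 'b topology \<Rightarrow> ('a \<Rightarrow> 'b) \<Rightarrow> bool" where
  "closed_graph X Y f \<longleftrightarrow> closedin (prod_topology X Y) (graph_of X f)"

definition singleton_closed :: "'b topology \<Rightarrow> 'b set \<Rightarrow> bool" where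
  "singleton_closed Y S \<longleftrightarrow> (\<exists>y. S = {y} \<and> closedin Y {y})"

end

theory Submission
  imports Defs
begin

locale alexsp =
  fixes X :: "'a topology"
  assumes alex: "alexandroff_space X"
begin

lemma mn_open: "a \<in> topspace X \<Longrightarrow> openin X (min_nbhd X a)"
  using alex unfolding alexandroff_space_def min_nbhd_def
  by (metis (mono_tags, lifting) empty_iff mem_Collect_eq openin_topspace)

lemma mn_mem: "a \<in> min_nbhd X a"
  unfolding min_nbhd_def by auto

lemma mn_sub: "openin X U \<Longrightarrow> a \<in> U \<Longrightarrow> min_nbhd X a \<subseteq> U"
  unfolding min_nbhd_def by auto

lemma mn_top: "a \<in> topspace X \<Longrightarrow> min_nbhd X a \<subseteq> topspace X"
  using mn_sub by blast

lemma mn_trans: "a \<in> topspace X \<Longrightarrow> z \<in> min_nbhd X a \<Longrightarrow> min_nbhd X z \<subseteq> min_nbhd X a"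
  using mn_open mn_sub by blast

lemma adj_sym: "alex_adj X x y \<Longrightarrow> alex_adj X y x"
  unfolding alex_adj_def by blast

lemma rel_sym: "alex_rel X x y \<Longrightarrow> alex_rel X y x"
  unfolding alex_rel_def
  by (induction rule: rtranclp_induct) (auto intro: converse_rtranclp_into_rtranclp adj_sym)

lemma rel_trans: "alex_rel X x y \<Longrightarrow> alex_rel X y z \<Longrightarrow> alex_rel X x z"
  unfolding alex_rel_def by auto

lemma rel_top: "alex_rel X x y \<Longrightarrow> x \<in> topspace X \<Longrightarrow> y \<in> topspace X"
  unfolding alex_rel_def
  by (induction rule: rtranclp_induct) (auto simp: alex_adj_def)

lemma class_mn: "z \<in> alex_class X x \<Longrightarrow> min_nbhd X z \<subseteq> alex_class X x"
proof
  fix w assume z: "z \<in> alex_class X x" and w: "w \<in> min_nbhd X z"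
  have zt: "z \<in> topspace X" using z by (simp add: alex_class_def)
  have wt: "w \<in> topspace X" using mn_top[OF zt] w by blast
  have "alex_adj X z w" unfolding alex_adj_def using zt wt w mn_mem by blast
  then have "alex_rel X z w" unfolding alex_rel_def by auto
  then show "w \<in> alex_class X x" using z wt rel_trans by (auto simp: alex_class_def)
qed

lemma class_open: "openin X (alex_class X x)"
  apply (subst openin_subopen)
  using class_mn mn_open mn_mem by (metis alex_class_def mem_Collect_eq)

lemma class_closed: "closedin X (alex_class X x)"
proof -
  have "openin X (topspace X - alex_class X x)"
  proof (subst openin_subopen, intro ballI)
    fix w assume w: "w \<in> topspace X - alex_class X x"
    have "alex_class X w \<subseteq> topspace X - alex_class X x"
    proof
      fix z assume z: "z \<in> alex_class X w"
      have zt: "z \<in> topspace X" and r: "alex_rel X w z" using z unfolding alex_class_def by auto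
      have "z \<notin> alex_class X x"
      proof
        assume "z \<in> alex_class X x"
        then have "alex_rel X x z" unfolding alex_class_def by auto
        then have "alex_rel X x w" using rel_trans rel_sym r by blast
        then show False using w unfolding alex_class_def by auto
      qed
      then show "z \<in> topspace X - alex_class X x" using zt by blast
    qed
    moreover have "w \<in> alex_class X w" using w unfolding alex_class_def alex_rel_def by auto
    ultimately show "\<exists>T. openin X T \<and> w \<in> T \<and> T \<subseteq> topspace X - alex_class X x"
      using class_open by blast
  qed
  moreover have "alex_class X x \<subseteq> topspace X" unfolding alex_class_def by auto
  ultimately show ?thesis unfolding closedin_def by blast
qed

lemma class_conn: "connectedin X (alex_class X x)"
proof -
  have "\<not>(openin X E1 \<and> openin X E2 \<and> S \<subseteq> E1 \<union> E2 \<and> E1 \<inter> E2 \<inter> S = {} \<and> E1 \<inter> S \<noteq> {} \<and> E2 \<inter> S \<noteq> {})"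
    if S: "S = alex_class X x" for E1 E2 S
  proof
    assume H: "openin X E1 \<and> openin X E2 \<and> S \<subseteq> E1 \<union> E2 \<and> E1 \<inter> E2 \<inter> S = {} \<and> E1 \<inter> S \<noteq> {} \<and> E2 \<inter> S \<noteq> {}"
    then obtain w0 where "w0 \<in> S" by blast
    then have "w0 \<in> topspace X" "alex_rel X x w0" using S unfolding alex_class_def by auto
    then have xt: "x \<in> topspace X" using rel_sym rel_top by blast
    then have xS: "x \<in> S" using S by (auto simp: alex_class_def alex_rel_def)
    have key: "w \<in> E" if E: "openin X E" "openin X E'" "S \<subseteq> E \<union> E'" "E \<inter> E' \<inter> S = {}" "x \<in> E"
       and r: "alex_rel X x w" for E E' w
      using r[unfolded alex_rel_def]
    proof (induction rule: rtranclp_induct)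
      case base then show ?case using E by simp
    next
      case (step w v)
      have "alex_rel X x w" using step.hyps(1) unfolding alex_rel_def .
      then have wS: "w \<in> S" using S xt rel_top unfolding alex_class_def by blast
      have adj: "v \<in> topspace X" "min_nbhd X w \<inter> min_nbhd X v \<noteq> {}"
        using step.hyps(2) unfolding alex_adj_def by auto
      have "alex_rel X x v" using rtranclp.rtrancl_into_rtrancl[OF step.hyps] unfolding alex_rel_def .
      then have vS: "v \<in> S" using S adj(1) unfolding alex_class_def by blast
      obtain z where z: "z \<in> min_nbhd X w" "z \<in> min_nbhd X v" using adj(2) by blast
      have "z \<in> E" using z(1) mn_sub[OF E(1) step.IH] by blast
      have "z \<in> S" using class_mn[of w x] wS z(1) S by blast
      show ?case
      proof (rule ccontr)
        assume "v \<notin> E"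
        then have "v \<in> E'" using vS E by blast
        then have "z \<in> E'" using z(2) mn_sub[OF E(2)] by blast
        then show False using \<open>z \<in> E\<close> \<open>z \<in> S\<close> E by blast
      qed
    qed
    show False
    proof (cases "x \<in> E1")
      case True
      have "S \<subseteq> E1" using key[of E1 E2] H True S by (auto simp: alex_class_def)
      then show False using H by blast
    next
      case False
      then have "x \<in> E2" using H xS by blast
      have "S \<subseteq> E2" using key[of E2 E1] H \<open>x \<in> E2\<close> S by (auto simp: alex_class_def)
      then show False using H by blast
    qed
  qed
  moreover have "alex_class X x \<subseteq> topspace X" unfolding alex_class_def by auto
  ultimately show ?thesis unfolding connectedin by blast
qed

lemma comp_eq: "x \<in> topspace X \<Longrightarrow> connected_component_of_set X x = alex_class X x"
proof
  assume xt: "x \<in> topspace X"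
  have xc: "x \<in> alex_class X x" using xt by (auto simp: alex_class_def alex_rel_def)
  show "alex_class X x \<subseteq> connected_component_of_set X x"
    using connected_component_of_maximal[OF class_conn xc] .
  have "x \<in> connected_component_of_set X x" using xt connected_component_of_refl by fastforce
  then show "connected_component_of_set X x \<subseteq> alex_class X x"
    using connectedin_clopen_cases[OF connectedin_connected_component_of class_closed class_open] xc
    by (auto simp: disjnt_def)
qed

lemma mem_graph: "(a, b) \<in> graph_of X f \<longleftrightarrow> a \<in> topspace X \<and> b = f a"
  unfolding graph_of_def by blast

lemma graph_nbhd:
  assumes cg: "closed_graph X Y f" and ft: "f ` topspace X \<subseteq> topspace Y"
    and at: "a \<in> topspace X" and bt: "b \<in> topspace Y" and nb: "b \<noteq> f a"
  obtains U V where "openin X U" "openin Y V" "a \<in> U" "b \<in> V"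
      "\<And>u. u \<in> U \<Longrightarrow> u \<in> topspace X \<Longrightarrow> f u \<notin> V"
proof -
  let ?G = "graph_of X f"
  have o: "openin (prod_topology X Y) (topspace (prod_topology X Y) - ?G)"
    using cg unfolding closed_graph_def closedin_def by blast
  have "(a, b) \<in> topspace (prod_topology X Y) - ?G"
    using at bt nb by (simp add: mem_graph topspace_prod_topology)
  from o[unfolded openin_prod_topology_alt, rule_format, OF this]
  obtain U V where UV: "openin X U" "openin Y V" "a \<in> U" "b \<in> V"
      "U \<times> V \<subseteq> topspace (prod_topology X Y) - ?G"
    by blast
  have *: "f u \<notin> V" if u: "u \<in> U" "u \<in> topspace X" for u
  proof
    assume "f u \<in> V"
    then have "(u, f u) \<in> U \<times> V" using u by blast
    then have "(u, f u) \<notin> ?G" using UV(5) by blast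
    then show False using u(2) by (simp add: mem_graph)
  qed
  show ?thesis by (rule that[OF UV(1-4) *])
qed

lemma graph_const:
  assumes cg: "closed_graph X Y f" and ft: "f ` topspace X \<subseteq> topspace Y"
    and xt: "x \<in> topspace X" and z: "z \<in> min_nbhd X x"
  shows "f z = f x"
proof (rule ccontr)
  assume ne: "f z \<noteq> f x"
  have zt: "z \<in> topspace X" using mn_top[OF xt] z by blast
  have fzt: "f z \<in> topspace Y" using ft zt by blast
  obtain U V where UV: "openin X U" "openin Y V" "x \<in> U" "f z \<in> V"
      "\<And>u. u \<in> U \<Longrightarrow> u \<in> topspace X \<Longrightarrow> f u \<notin> V"
    using graph_nbhd[OF cg ft xt fzt ne] by blast
  have "z \<in> U" using mn_sub[OF UV(1,3)] z by blast
  then show False using UV(4,5) zt by blast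
qed

lemma graph_class:
  assumes cg: "closed_graph X Y f" and ft: "f ` topspace X \<subseteq> topspace Y"
    and xt: "x \<in> topspace X" and r: "alex_rel X x y"
  shows "f y = f x"
  using r[unfolded alex_rel_def]
proof (induction rule: rtranclp_induct)
  case base then show ?case by simp
next
  case (step w v)
  have adj: "w \<in> topspace X" "v \<in> topspace X" "min_nbhd X w \<inter> min_nbhd X v \<noteq> {}"
    using step.hyps(2) unfolding alex_adj_def by auto
  obtain z where z: "z \<in> min_nbhd X w" "z \<in> min_nbhd X v" using adj(3) by blast
  show ?case using graph_const[OF cg ft adj(1) z(1)] graph_const[OF cg ft adj(2) z(2)] step.IH by simp
qed

lemma graph_closed_pt:
  assumes cg: "closed_graph X Y f" and ft: "f ` topspace X \<subseteq> topspace Y"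
    and xt: "x \<in> topspace X"
  shows "closedin Y {f x}"
proof -
  have "openin Y (topspace Y - {f x})"
  proof (subst openin_subopen, intro ballI)
    fix y assume y: "y \<in> topspace Y - {f x}"
    then have yt: "y \<in> topspace Y" and ny: "y \<noteq> f x" by auto
    obtain U V where UV: "openin X U" "openin Y V" "x \<in> U" "y \<in> V"
        "\<And>u. u \<in> U \<Longrightarrow> u \<in> topspace X \<Longrightarrow> f u \<notin> V"
      using graph_nbhd[OF cg ft xt yt ny] by blast
    have "f x \<notin> V" using UV(3,5) xt by blast
    then have "V \<subseteq> topspace Y - {f x}" using openin_subset[OF UV(2)] by blast
    then show "\<exists>T. openin Y T \<and> y \<in> T \<and> T \<subseteq> topspace Y - {f x}" using UV by blast
  qed
  moreover have "{f x} \<subseteq> topspace Y" using ft xt by blast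
  ultimately show ?thesis unfolding closedin_def by blast
qed

lemma class_img:
  assumes ft: "f ` topspace X \<subseteq> topspace Y" and xt: "x \<in> topspace X"
    and sc: "singleton_closed Y (f ` alex_class X x)"
  shows "closedin Y {f x}" "\<And>z. z \<in> alex_class X x \<Longrightarrow> f z = f x"
proof -
  have xc: "x \<in> alex_class X x" using xt by (auto simp: alex_class_def alex_rel_def)
  obtain c where c: "f ` alex_class X x = {c}" "closedin Y {c}" using sc unfolding singleton_closed_def by blast
  have "f x \<in> f ` alex_class X x" using xc by (rule imageI)
  then have "c = f x" using c(1) by simp
  then show "closedin Y {f x}" using c by simp
  show "f z = f x" if "z \<in> alex_class X x" for z using c that \<open>c = f x\<close> by blast
qed

end

theorem theorem3p5:
  fixes X :: "'a topology" and Y :: "'b topology" and f :: "'a \<Rightarrow> 'b"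
  assumes "alexandroff_space X"
    and "f ` topspace X \<subseteq> topspace Y"
  shows "(closed_graph X Y f \<longleftrightarrow>
            (\<forall>C\<in>connected_components_of X. singleton_closed Y (f ` C)))
       \<and> ((\<forall>C\<in>connected_components_of X. singleton_closed Y (f ` C)) \<longleftrightarrow>
            (\<forall>x\<in>topspace X. singleton_closed Y (f ` alex_class X x)))
       \<and> (closed_graph X Y f \<longrightarrow> continuous_map X Y f)"
proof -
  interpret alexsp X using assms(1) by unfold_locales
  note ft = assms(2)
  have refl: "x \<in> alex_class X x" if "x \<in> topspace X" for x
    using that unfolding alex_class_def alex_rel_def by simp
  have C: "(\<forall>C\<in>connected_components_of X. singleton_closed Y (f ` C)) \<longleftrightarrow>
            (\<forall>x\<in>topspace X. singleton_closed Y (f ` alex_class X x))"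
    unfolding connected_components_of_def ball_simps(9)[symmetric] using comp_eq by simp
  have A: "\<forall>x\<in>topspace X. singleton_closed Y (f ` alex_class X x)" if cg: "closed_graph X Y f"
  proof
    fix x assume xt: "x \<in> topspace X"
    have "f ` alex_class X x \<subseteq> {f x}"
    proof
      fix b assume "b \<in> f ` alex_class X x"
      then obtain z where "z \<in> alex_class X x" "b = f z" by blast
      then show "b \<in> {f x}" using graph_class[OF cg ft xt] unfolding alex_class_def by simp
    qed
    moreover have "f x \<in> f ` alex_class X x" using refl[OF xt] by (rule imageI)
    ultimately have "f ` alex_class X x = {f x}" by blast
    then show "singleton_closed Y (f ` alex_class X x)"
      using graph_closed_pt[OF cg ft xt] unfolding singleton_closed_def by blast
  qed
  have B: "closed_graph X Y f" if H: "\<forall>x\<in>topspace X. singleton_closed Y (f ` alex_class X x)"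
  proof -
    let ?G = "graph_of X f"
    have "openin (prod_topology X Y) (topspace (prod_topology X Y) - ?G)"
      unfolding openin_prod_topology_alt
    proof (intro allI impI)
      fix a b assume ab: "(a, b) \<in> topspace (prod_topology X Y) - ?G"
      then have at: "a \<in> topspace X" and bt: "b \<in> topspace Y" and nb: "b \<noteq> f a"
        by (auto simp: mem_graph topspace_prod_topology)
      note cl = class_img[OF ft at H[rule_format, OF at]]
      have o1: "openin Y (topspace Y - {f a})" using cl(1) unfolding closedin_def by blast
      have "alex_class X a \<times> (topspace Y - {f a}) \<subseteq> topspace (prod_topology X Y) - ?G"
      proof
        fix p assume p: "p \<in> alex_class X a \<times> (topspace Y - {f a})"
        then obtain u v where uv: "p = (u, v)" "u \<in> alex_class X a" "v \<in> topspace Y" "v \<noteq> f a"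
          by blast
        have "f u = f a" using cl(2)[OF uv(2)] .
        moreover have "u \<in> topspace X" using uv(2) unfolding alex_class_def by blast
        ultimately show "p \<in> topspace (prod_topology X Y) - ?G"
          using uv by (simp add: mem_graph topspace_prod_topology)
      qed
      then show "\<exists>U V. openin X U \<and> openin Y V \<and> a \<in> U \<and> b \<in> V \<and>
           U \<times> V \<subseteq> topspace (prod_topology X Y) - ?G"
        using class_open o1 bt nb refl[OF at] by blast
    qed
    moreover have "?G \<subseteq> topspace (prod_topology X Y)"
    proof
      fix p assume "p \<in> ?G"
      then obtain u where "p = (u, f u)" "u \<in> topspace X" unfolding graph_of_def by blast
      then show "p \<in> topspace (prod_topology X Y)" using ft by (auto simp: topspace_prod_topology)
    qed
    ultimately show ?thesis unfolding closed_graph_def closedin_def by blast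
  qed
  have D: "continuous_map X Y f" if cg: "closed_graph X Y f"
    unfolding continuous_map_def
  proof (intro conjI allI impI)
    show "f \<in> topspace X \<rightarrow> topspace Y" using ft by auto
    fix U assume "openin Y U"
    show "openin X {x \<in> topspace X. f x \<in> U}"
    proof (subst openin_subopen, intro ballI)
      fix x assume x: "x \<in> {x \<in> topspace X. f x \<in> U}"
      then have xt: "x \<in> topspace X" by blast
      have "alex_class X x \<subseteq> {x \<in> topspace X. f x \<in> U}"
      proof
        fix z assume "z \<in> alex_class X x"
        then have "z \<in> topspace X" "alex_rel X x z" unfolding alex_class_def by auto
        then show "z \<in> {x \<in> topspace X. f x \<in> U}" using graph_class[OF cg ft xt] x by simp
      qed
      then show "\<exists>T. openin X T \<and> x \<in> T \<and> T \<subseteq> {x \<in> topspace X. f x \<in> U}"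
        using class_open refl[OF xt] by blast
    qed
  qed
  show ?thesis using A B C D by blast
qed

end
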